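(* Let $X$ be a complex variety, $r\geq1$, $\mathfrak a=(\mathfrak a_1,\dots,\mathfrak a_r)\in(\mathscr{E}xp\mathscr M_{\mathbf C})^r$, and let $\sum_{\mathbf m\in\mathbf N^r}\mathfrak c_{\mathbf m}\mathbf T^{\mathbf m}$ be a formal series with coefficients in $\mathscr{E}xp\mathscr M_X$ which is convergent at $\mathfrak a$, in the sense that for every $A\in\mathbf Z$ there is $\mathbf m_0\in\mathbf N^r$ such that $w_X(\mathfrak c_{\mathbf m}\mathfrak a^{\mathbf m})<A$ for all $\mathbf m\not\leq\mathbf m_0$. Let $\varepsilon\in\{0,1\}^r\setminus\{\mathbf 0\}$ and $\langle\varepsilon,\mathbf m\rangle=\sum_i\varepsilon_im_i$. Then \[\sum_{\mathbf m'\leq\mathbf m}\mathfrak c_{\mathbf m'}\mathfrak a^{\mathbf m'}\mathbf L^{-\langle\varepsilon,\mathbf m-\mathbf m'\rangle}\] tends to $0$ in $\widehat{\mathscr{E}xp\mathscr M_X}$ as $\min_{1\leq i\leq r}m_i\to\infty$ (i.e. for every $A$ its weight is $<A$ once $\min_i m_i$ is large enough). If moreover the series is $\rho$-weight-linearly convergent at $\mathfrak a$ for some $\rho\in\mathbf Z_{\geq1}^r$, then there exist $\delta>0$ and $i_0\in\mathbf N$ such that \[w_X\Big(\sum_{\mathbf m'\leq\mathbf m}\mathfrak c_{\mathbf m'}\mathfrak a^{\mathbf m'}\mathbf L^{-\langle\varepsilon,\mathbf m-\mathbf m'\rangle}\Big)<-\delta\langle\varepsilon,\mathbf m\rangle\]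 whenever $\langle\varepsilon,\mathbf m\rangle\geq i_0$.
   Context: $\mathscr{E}xp\mathscr M_X$ is the Grothendieck ring of varieties with exponentials over $X$ localised at $\mathbf L$, with Bilu's weight function $w_X:\mathscr{E}xp\mathscr M_X\to\mathbf Z\cup\{-\infty\}$ (properties: $w_X(0)=-\infty$, $w_X(\mathfrak a+\mathfrak a')\leq\max(w_X(\mathfrak a),w_X(\mathfrak a'))$, $w_X(\mathbf L^m\mathfrak a)=w_X(\mathfrak a)+2m$, submultiplicativity $w_X(\mathfrak a\mathfrak a')\le w_X(\mathfrak a)+w_X(\mathfrak a')$). $\widehat{\mathscr{E}xp\mathscr M_X}=\varprojlim_n \mathscr{E}xp\mathscr M_X/W_{\leq n}$ where $W_{\leq n}=\{\mathfrak a: w_X(\mathfrak a)\leq n\}$. On $\mathbf N^r$, $\mathbf m'\leq\mathbf m$ means $m'_i\leq m_i$ for all $i$; $\mathfrak a^{\mathbf m}=\prod_i\mathfrak a_i^{m_i}$. A series $\sum\mathfrak c_{\mathbf m}\mathbf T^{\mathbf m}$ is $\rho$-weight-linearly convergent at $\mathfrak a$ if there is $\delta>0$ with $w_X(\mathfrak c_{\mathbf m}\mathfrak a^{\mathbf m})<-\delta\langle\rho,\mathbf m\rangle$ for all $\mathbf m$ with $\langle\rho,\mathbf m\rangle=\sum_i\rho_im_i$ sufficiently large. *)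

theory Defs
  imports "HOL-Library.Extended_Real"
begin

text \<open>Abstract setting: the ring ExpM_X is modelled by a commutative ring 'x,
  with distinguished element L and its inverse Linv (localisation at L), and
  Bilu's weight function w : 'x \<Rightarrow> Z \<union> {-\<infinity>}, modelled in ereal, subject to
  exactly the properties listed in the paper.\<close>

definition weight_axioms :: "('x::comm_ring_1 \<Rightarrow> ereal) \<Rightarrow> 'x \<Rightarrow> 'x \<Rightarrow> bool" where
  "weight_axioms w L Linv \<longleftrightarrow>
     L * Linv = 1 \<and>
     (\<forall>x. w x = -\<infinity> \<or> (\<exists>n::int. w x = ereal (of_int n))) \<and>
     w 0 = -\<infinity> \<and>
     (\<forall>x y. w (x + y) \<le> max (w x) (w y)) \<and>
     (\<forall>x y. w (x * y) \<le> w x + w y) \<and>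
     (\<forall>x. w (L * x) = w x + 2) \<and>
     (\<forall>x. w (Linv * x) = w x - 2)"

definition Lpow :: "'x::comm_ring_1 \<Rightarrow> 'x \<Rightarrow> int \<Rightarrow> 'x" where
  "Lpow L Linv k = (if 0 \<le> k then L ^ nat k else Linv ^ nat (- k))"

text \<open>Multi-indices in N^r, represented as functions nat \<Rightarrow> nat vanishing from r on.\<close>
definition multi_idx :: "nat \<Rightarrow> (nat \<Rightarrow> nat) set" where
  "multi_idx r = {m. \<forall>i\<ge>r. m i = 0}"

definition mle :: "nat \<Rightarrow> (nat \<Rightarrow> nat) \<Rightarrow> (nat \<Rightarrow> nat) \<Rightarrow> bool" where
  "mle r m' m \<longleftrightarrow> (\<forall>i<r. m' i \<le> m i)"

definition pairing :: "nat \<Rightarrow> (nat \<Rightarrow> nat) \<Rightarrow> (nat \<Rightarrow> nat) \<Rightarrow> nat" where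
  "pairing r e m = (\<Sum>i<r. e i * m i)"

definition mpow :: "nat \<Rightarrow> (nat \<Rightarrow> 'x::comm_ring_1) \<Rightarrow> (nat \<Rightarrow> nat) \<Rightarrow> 'x" where
  "mpow r a m = (\<Prod>i<r. a i ^ m i)"

definition twisted_sum :: "nat \<Rightarrow> 'x::comm_ring_1 \<Rightarrow> 'x \<Rightarrow> ((nat \<Rightarrow> nat) \<Rightarrow> 'x) \<Rightarrow>
    (nat \<Rightarrow> 'x) \<Rightarrow> (nat \<Rightarrow> nat) \<Rightarrow> (nat \<Rightarrow> nat) \<Rightarrow> 'x" where
  "twisted_sum r L Linv c a eps m =
     (\<Sum>m'\<in>{m'\<in>multi_idx r. mle r m' m}.
        c m' * mpow r a m' * Lpow L Linv (- int (\<Sum>i<r. eps i * (m i - m' i))))"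

definition series_convergent_at ::
    "nat \<Rightarrow> ('x::comm_ring_1 \<Rightarrow> ereal) \<Rightarrow> ((nat \<Rightarrow> nat) \<Rightarrow> 'x) \<Rightarrow> (nat \<Rightarrow> 'x) \<Rightarrow> bool" where
  "series_convergent_at r w c a \<longleftrightarrow>
     (\<forall>A::int. \<exists>m0\<in>multi_idx r. \<forall>m\<in>multi_idx r.
        \<not> mle r m m0 \<longrightarrow> w (c m * mpow r a m) < ereal (of_int A))"

definition weight_linearly_convergent ::
    "nat \<Rightarrow> ('x::comm_ring_1 \<Rightarrow> ereal) \<Rightarrow> (nat \<Rightarrow> nat) \<Rightarrow> ((nat \<Rightarrow> nat) \<Rightarrow> 'x) \<Rightarrow> (nat \<Rightarrow> 'x) \<Rightarrow> bool" where
  "weight_linearly_convergent r w rho c a \<longleftrightarrow>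
     (\<exists>\<delta>::real>0. \<exists>K. \<forall>m\<in>multi_idx r. pairing r rho m \<ge> K \<longrightarrow>
        w (c m * mpow r a m) < ereal (- \<delta> * real (pairing r rho m)))"

end

theory Submission
  imports Defs "HOL-Library.FuncSet"
begin

lemma fin_box: "finite {m'\<in>multi_idx r. mle r m' m}"
proof -
  let ?g = "\<lambda>f i. if i < r then f i else (0::nat)"
  have "{m'\<in>multi_idx r. mle r m' m} \<subseteq> ?g ` (PiE {..<r} (\<lambda>i. {..m i}))"
  proof
    fix m' assume h: "m' \<in> {m'\<in>multi_idx r. mle r m' m}"
    have "m' = ?g (restrict m' {..<r})"
      using h by (auto simp: multi_idx_def fun_eq_iff)
    moreover have "restrict m' {..<r} \<in> PiE {..<r} (\<lambda>i. {..m i})"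
      using h by (auto simp: mle_def)
    ultimately show "m' \<in> ?g ` (PiE {..<r} (\<lambda>i. {..m i}))" by blast
  qed
  moreover have "finite (PiE {..<r} (\<lambda>i. {..m i}))" by (rule finite_PiE) auto
  ultimately show ?thesis by (meson finite_imageI finite_subset)
qed

lemma w_Linv_pow:
  assumes W: "weight_axioms w L Linv"
  shows "w (y * Linv ^ k) = w y - ereal (2 * real k)"
proof (induction k)
  case 0 then show ?case by simp
next
  case (Suc k)
  have "w (y * Linv ^ Suc k) = w (Linv * (y * Linv ^ k))" by (simp add: ac_simps)
  also have "\<dots> = w (y * Linv ^ k) - 2" using W by (simp add: weight_axioms_def)
  also have "\<dots> = w y - ereal (2 * real (Suc k))" unfolding Suc
    by (cases "w y") (auto simp: algebra_simps)
  finally show ?case .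
qed

lemma w_sum_lt:
  assumes W: "weight_axioms w L Linv" and "finite S" and "-\<infinity> < B"
    and "\<forall>x\<in>S. w (f x) < B"
  shows "w (sum f S) < B"
  using assms(2,4)
proof (induction S rule: finite_induct)
  case empty then show ?case using W assms(3) by (simp add: weight_axioms_def)
next
  case (insert x F)
  have "w (sum f (insert x F)) = w (f x + sum f F)" using insert by simp
  also have "\<dots> \<le> max (w (f x)) (w (sum f F))" using W by (simp add: weight_axioms_def)
  also have "\<dots> < B" using insert by simp
  finally show ?case .
qed

lemma w_bound:
  assumes W: "weight_axioms w L Linv" and "finite S"
  shows "\<exists>B::int. \<forall>x\<in>S. w (f x) \<le> ereal (of_int B)"
  using assms(2)
proof (induction S rule: finite_induct)
  case empty then show ?case by simp
next
  case (insert x F)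
  then obtain B::int where B: "\<forall>y\<in>F. w (f y) \<le> ereal (of_int B)" by blast
  from W have "w (f x) = -\<infinity> \<or> (\<exists>n::int. w (f x) = ereal (of_int n))"
    by (simp add: weight_axioms_def)
  then show ?case
  proof
    assume "w (f x) = -\<infinity>" then show ?thesis using B by auto
  next
    assume "\<exists>n::int. w (f x) = ereal (of_int n)"
    then obtain n::int where n: "w (f x) = ereal (of_int n)" by blast
    have "\<forall>y\<in>insert x F. w (f y) \<le> ereal (of_int (max B n))"
      using B n by (auto intro: order_trans)
    then show ?thesis by blast
  qed
qed

lemma Lpow_neg: "Lpow L Linv (- int n) = Linv ^ n"
  by (simp add: Lpow_def)


lemma w_shift_lt:
  assumes W: "weight_axioms w L Linv"
    and H: "\<And>n::int. w y = ereal (of_int n) \<Longrightarrow> real_of_int n - 2 * real k < X"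
  shows "w (y * Linv ^ k) < ereal X"
proof -
  have e: "w (y * Linv ^ k) = w y - ereal (2 * real k)" by (rule w_Linv_pow[OF W])
  from W have "w y = -\<infinity> \<or> (\<exists>n::int. w y = ereal (of_int n))"
    by (simp add: weight_axioms_def)
  then show ?thesis
  proof
    assume "w y = -\<infinity>" then show ?thesis using e by simp
  next
    assume "\<exists>n::int. w y = ereal (of_int n)"
    then obtain n::int where n: "w y = ereal (of_int n)" by blast
    show ?thesis using e n H[OF n] by simp
  qed
qed

lemma pairing_split:
  assumes "mle r m' m"
  shows "(\<Sum>i<r. eps i * (m i - m' i)) + pairing r eps m' = pairing r eps m"
proof -
  have "(\<Sum>i<r. eps i * (m i - m' i)) + pairing r eps m' = (\<Sum>i<r. eps i * (m i - m' i) + eps i * m' i)"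
    by (simp add: pairing_def sum.distrib)
  also have "\<dots> = (\<Sum>i<r. eps i * m i)"
  proof (rule sum.cong)
    fix i assume "i \<in> {..<r}"
    then have "m' i \<le> m i" using assms by (simp add: mle_def)
    then have "eps i * (m i - m' i) + eps i * m' i = eps i * (m i - m' i + m' i)"
      by (simp only: add_mult_distrib2)
    also have "\<dots> = eps i * m i" using \<open>m' i \<le> m i\<close> by simp
    finally show "eps i * (m i - m' i) + eps i * m' i = eps i * m i" .
  qed simp
  finally show ?thesis by (simp add: pairing_def)
qed

theorem lemma2p2:
  fixes w :: "'x::comm_ring_1 \<Rightarrow> ereal" and L Linv :: 'x
    and r :: nat and a :: "nat \<Rightarrow> 'x" and c :: "(nat \<Rightarrow> nat) \<Rightarrow> 'x"
    and eps :: "nat \<Rightarrow> nat"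
  assumes W: "weight_axioms w L Linv"
    and r: "r \<ge> 1"
    and conv: "series_convergent_at r w c a"
    and eps01: "\<forall>i<r. eps i \<in> {0, 1}"
    and eps_nz: "\<exists>i<r. eps i \<noteq> 0"
  shows "(\<forall>A::int. \<exists>N::nat. \<forall>m\<in>multi_idx r. (\<forall>i<r. N \<le> m i) \<longrightarrow>
            w (twisted_sum r L Linv c a eps m) < ereal (of_int A))
       \<and> (\<forall>rho. (\<forall>i<r. rho i \<ge> 1) \<longrightarrow> weight_linearly_convergent r w rho c a \<longrightarrow>
            (\<exists>\<delta>::real>0. \<exists>i0::nat. \<forall>m\<in>multi_idx r. pairing r eps m \<ge> i0 \<longrightarrow>
               w (twisted_sum r L Linv c a eps m) < ereal (- \<delta> * real (pairing r eps m))))"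
proof
  define b where "b = (\<lambda>m'. c m' * mpow r a m')"
  have ts: "twisted_sum r L Linv c a eps m =
     (\<Sum>m'\<in>{m'\<in>multi_idx r. mle r m' m}. b m' * Linv ^ (\<Sum>i<r. eps i * (m i - m' i)))" for m
    unfolding twisted_sum_def b_def using Lpow_neg[of L Linv] by presburger
  obtain i0 where i0: "i0 < r" "eps i0 = 1" using eps_nz eps01 by auto
  show "\<forall>A::int. \<exists>N::nat. \<forall>m\<in>multi_idx r. (\<forall>i<r. N \<le> m i) \<longrightarrow>
            w (twisted_sum r L Linv c a eps m) < ereal (of_int A)"
  proof
    fix A :: int
    obtain m0 where m0: "m0 \<in> multi_idx r"
      and H: "\<forall>m\<in>multi_idx r. \<not> mle r m m0 \<longrightarrow> w (b m) < ereal (of_int A)"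
      using conv by (auto simp: series_convergent_at_def b_def)
    obtain B :: int where B: "\<forall>x\<in>{m'\<in>multi_idx r. mle r m' m0}. w (b x) \<le> ereal (of_int B)"
      using w_bound[OF W fin_box] by blast
    define N where "N = nat (B - A) + 1 + m0 i0"
    have "\<forall>m\<in>multi_idx r. (\<forall>i<r. N \<le> m i) \<longrightarrow>
            w (twisted_sum r L Linv c a eps m) < ereal (of_int A)"
    proof (intro ballI impI)
      fix m assume m: "m \<in> multi_idx r" and mN: "\<forall>i<r. N \<le> m i"
      show "w (twisted_sum r L Linv c a eps m) < ereal (of_int A)"
        unfolding ts
      proof (rule w_sum_lt[OF W fin_box], simp, intro ballI)
        fix m' assume m': "m' \<in> {m'\<in>multi_idx r. mle r m' m}"
        define E where "E = (\<Sum>i<r. eps i * (m i - m' i))"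
        show "w (b m' * Linv ^ (\<Sum>i<r. eps i * (m i - m' i))) < ereal (of_int A)"
          unfolding E_def[symmetric]
        proof (rule w_shift_lt[OF W])
          fix n :: int assume n: "w (b m') = ereal (of_int n)"
          show "real_of_int n - 2 * real E < real_of_int A"
          proof (cases "mle r m' m0")
            case True
            have "n \<le> B" using B m' True n by auto
            have "eps i0 * (m i0 - m' i0) \<le> E" unfolding E_def
              by (rule member_le_sum) (use i0 in auto)
            then have "m i0 - m' i0 \<le> E" using i0 by simp
            moreover have "m' i0 \<le> m0 i0" using True i0 by (simp add: mle_def)
            moreover have "N \<le> m i0" using mN i0 by simp
            ultimately have "nat (B - A) + 1 \<le> E" unfolding N_def by linarith
            then have "real_of_int (B - A) + 1 \<le> real E" by linarith
            then show ?thesis using \<open>n \<le> B\<close> by linarith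
          next
            case False
            then have "w (b m') < ereal (of_int A)" using H m' by auto
            then show ?thesis using n by simp
          qed
        qed
      qed
    qed
    then show "\<exists>N::nat. \<forall>m\<in>multi_idx r. (\<forall>i<r. N \<le> m i) \<longrightarrow>
            w (twisted_sum r L Linv c a eps m) < ereal (of_int A)" by blast
  qed
  show "\<forall>rho. (\<forall>i<r. rho i \<ge> 1) \<longrightarrow> weight_linearly_convergent r w rho c a \<longrightarrow>
            (\<exists>\<delta>::real>0. \<exists>i0::nat. \<forall>m\<in>multi_idx r. pairing r eps m \<ge> i0 \<longrightarrow>
               w (twisted_sum r L Linv c a eps m) < ereal (- \<delta> * real (pairing r eps m)))"
  proof (intro allI impI)
    fix rho :: "nat \<Rightarrow> nat"
    assume rho: "\<forall>i<r. rho i \<ge> 1" and WL: "weight_linearly_convergent r w rho c a"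
    obtain \<delta> :: real and K where dpos: "\<delta> > 0"
      and HK: "\<forall>m\<in>multi_idx r. pairing r rho m \<ge> K \<longrightarrow>
        w (b m) < ereal (- \<delta> * real (pairing r rho m))"
      using WL by (auto simp: weight_linearly_convergent_def b_def)
    let ?F = "{m'\<in>multi_idx r. pairing r rho m' < K}"
    have Fsub: "?F \<subseteq> {m'\<in>multi_idx r. mle r m' (\<lambda>i. K)}"
    proof
      fix m' assume h: "m' \<in> ?F"
      have "\<forall>i<r. m' i \<le> K"
      proof (intro allI impI)
        fix i assume "i < r"
        have "m' i \<le> rho i * m' i" using rho \<open>i < r\<close> by simp
        also have "\<dots> \<le> pairing r rho m'" unfolding pairing_def
          by (rule member_le_sum) (use \<open>i < r\<close> in auto)
        finally show "m' i \<le> K" using h by simp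
      qed
      then show "m' \<in> {m'\<in>multi_idx r. mle r m' (\<lambda>i. K)}" using h by (simp add: mle_def)
    qed
    have finF: "finite ?F" using finite_subset[OF Fsub fin_box] .
    obtain B :: int where B: "\<forall>x\<in>?F. w (b x) \<le> ereal (of_int B)"
      using w_bound[OF W finF] by blast
    define d where "d = min \<delta> 1"
    have dpos': "d > 0" "d \<le> \<delta>" "d \<le> 1" using dpos by (auto simp: d_def)
    define I where "I = nat B + 2 * K + 1"
    have "\<forall>m\<in>multi_idx r. pairing r eps m \<ge> I \<longrightarrow>
               w (twisted_sum r L Linv c a eps m) < ereal (- d * real (pairing r eps m))"
    proof (intro ballI impI)
      fix m assume m: "m \<in> multi_idx r" and mI: "pairing r eps m \<ge> I"
      define P where "P = pairing r eps m"
      show "w (twisted_sum r L Linv c a eps m) < ereal (- d * real (pairing r eps m))"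
        unfolding ts
      proof (rule w_sum_lt[OF W fin_box], simp, intro ballI)
        fix m' assume m': "m' \<in> {m'\<in>multi_idx r. mle r m' m}"
        define E where "E = (\<Sum>i<r. eps i * (m i - m' i))"
        have EP: "E + pairing r eps m' = P" unfolding E_def P_def
          by (rule pairing_split) (use m' in simp)
        have er: "pairing r eps m' \<le> pairing r rho m'" unfolding pairing_def
          by (rule sum_mono) (use eps01 rho in \<open>auto intro: mult_le_mono1\<close>)
        show "w (b m' * Linv ^ (\<Sum>i<r. eps i * (m i - m' i))) < ereal (- d * real (pairing r eps m))"
          unfolding E_def[symmetric] P_def[symmetric]
        proof (rule w_shift_lt[OF W])
          fix n :: int assume n: "w (b m') = ereal (of_int n)"
          have EPr: "real E + real (pairing r eps m') = real P" using EP by linarith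
          show "real_of_int n - 2 * real E < - d * real P"
          proof (cases "pairing r rho m' \<ge> K")
            case True
            then have "w (b m') < ereal (- \<delta> * real (pairing r rho m'))" using HK m' by auto
            then have n1: "real_of_int n < - \<delta> * real (pairing r rho m')" using n by simp
            have "d * real (pairing r eps m') \<le> \<delta> * real (pairing r rho m')"
              by (rule mult_mono) (use dpos' er in auto)
            moreover have "d * real E \<le> 2 * real E" using dpos' by (simp add: mult_right_mono)
            moreover have "d * real P = d * real E + d * real (pairing r eps m')"
              using EPr by (simp add: algebra_simps flip: EPr)
            ultimately show ?thesis using n1 by linarith
          next
            case False
            then have "m' \<in> ?F" using m' by simp
            then have "n \<le> B" using B n by auto
            have "pairing r eps m' < K" using False er by linarith
            have "real I \<le> real P" using mI P_def by simp
            moreover have "real_of_int B \<le> real (nat B)" by linarith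
            moreover have "d * real P \<le> real P" using dpos' by (simp add: mult_left_le_one_le)
            ultimately show ?thesis using \<open>n \<le> B\<close> \<open>pairing r eps m' < K\<close> EPr
              unfolding I_def by linarith
          qed
        qed
      qed
    qed
    then show "\<exists>\<delta>::real>0. \<exists>i0::nat. \<forall>m\<in>multi_idx r. pairing r eps m \<ge> i0 \<longrightarrow>
               w (twisted_sum r L Linv c a eps m) < ereal (- \<delta> * real (pairing r eps m))"
      using dpos' by blast
  qed
qed

end
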